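(* Let $\mathcal{D}=(X,\mathcal{B})$ be a $(v,k,\lambda)$ symmetric design of order $q=k-\lambda\geq 2$. Then there exists a semi-resolving set for the points of $\mathcal{D}$ of size $\left\lceil \frac{v\log v}{k-\lambda}\right\rceil$, i.e. a set $S_\mathcal{B}\subseteq\mathcal{B}$ of this size such that for every pair of distinct points $x,y\in X$ some block $B\in S_\mathcal{B}$ satisfies $d(x,B)\neq d(y,B)$ in the incidence graph of $\mathcal{D}$ (equivalently, $B$ contains exactly one of $x,y$).
   Context: A symmetric design with parameters $(v,k,\lambda)$ is a pair $(X,\mathcal{B})$ where $X$ is a set of $v$ points and $\mathcal{B}$ is a family of $k$-subsets of $X$ (blocks) such that any two distinct points lie in exactly $\lambda$ blocks and any two distinct blocks meet in exactly $\lambda$ points. Its order is $q=k-\lambda$. The incidence graph is the bipartite graph on $X\cup\mathcal{B}$ with $x$ adjacent to $B$ iff $x\in B$; $d$ is graph distance. $\log$ denotes the natural logarithm. *)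

theory Defs
  imports "HOL-Analysis.Analysis" "HOL-Library.Extended_Nat"
begin

definition symmetric_design :: "'a set \<Rightarrow> 'a set set \<Rightarrow> nat \<Rightarrow> nat \<Rightarrow> nat \<Rightarrow> bool" where
  "symmetric_design X Bs v k lam \<longleftrightarrow>
     finite X \<and> card X = v \<and> card Bs = v \<and>
     (\<forall>B\<in>Bs. B \<subseteq> X \<and> card B = k) \<and>
     (\<forall>x\<in>X. \<forall>y\<in>X. x \<noteq> y \<longrightarrow> card {B \<in> Bs. x \<in> B \<and> y \<in> B} = lam) \<and>
     (\<forall>B\<in>Bs. \<forall>C\<in>Bs. B \<noteq> C \<longrightarrow> card (B \<inter> C) = lam)"

definition inc_adj :: "'a set \<Rightarrow> 'a set set \<Rightarrow> ('a + 'a set) \<Rightarrow> ('a + 'a set) \<Rightarrow> bool" where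
  "inc_adj X Bs u w \<longleftrightarrow>
     (\<exists>x B. x \<in> X \<and> B \<in> Bs \<and> x \<in> B \<and> ((u = Inl x \<and> w = Inr B) \<or> (u = Inr B \<and> w = Inl x)))"

definition inc_dist :: "'a set \<Rightarrow> 'a set set \<Rightarrow> ('a + 'a set) \<Rightarrow> ('a + 'a set) \<Rightarrow> enat" where
  "inc_dist X Bs u w =
     (if \<exists>n. (inc_adj X Bs ^^ n) u w then enat (LEAST n. (inc_adj X Bs ^^ n) u w) else \<infinity>)"

end

theory Submission
  imports Defs
begin

definition Ub :: "'a set \<Rightarrow> 'a set set \<Rightarrow> ('a \<times> 'a) set" where
  "Ub X S = {p \<in> X \<times> X. fst p \<noteq> snd p \<and> (\<forall>B\<in>S. (fst p \<in> B) = (snd p \<in> B))}"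

lemma card_as_sum:
  assumes "finite B"
  shows "card {b\<in>B. Q b} = (\<Sum>b\<in>B. if Q b then (1::nat) else 0)"
proof -
  have "card {b\<in>B. Q b} = (\<Sum>b\<in>{b\<in>B. Q b}. (1::nat))" by (rule card_eq_sum)
  also have "\<dots> = (\<Sum>b\<in>B. if Q b then (1::nat) else 0)" by (rule sum.inter_filter[OF assms])
  finally show ?thesis .
qed

lemma swap_count:
  assumes "finite A" "finite B"
  shows "(\<Sum>a\<in>A. card {b\<in>B. P a b}) = (\<Sum>b\<in>B. card {a\<in>A. P a b})"
proof -
  have "(\<Sum>a\<in>A. card {b\<in>B. P a b}) = (\<Sum>a\<in>A. \<Sum>b\<in>B. if P a b then (1::nat) else 0)"
    using card_as_sum[OF assms(2), of "P _"] by simp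
  also have "\<dots> = (\<Sum>b\<in>B. \<Sum>a\<in>A. if P a b then (1::nat) else 0)" by (rule sum.swap[of "\<lambda>a b. if P a b then (1::nat) else 0"])
  also have "\<dots> = (\<Sum>b\<in>B. card {a\<in>A. P a b})"
    using card_as_sum[OF assms(1), of "\<lambda>a. P a _"] by simp
  finally show ?thesis .
qed

lemma exp_bound: "n \<ge> 2 \<Longrightarrow> real n ^ 2 + real n + 1 \<le> exp (real n)"
proof (induction n rule: nat_induct_at_least)
  case base
  have "(7::real) \<le> (1 + 2 / real (50::nat)) ^ 50" by (simp add: power_divide)
  also have "\<dots> \<le> exp 2" by (rule exp_ge_one_plus_x_over_n_power_n) auto
  finally show ?case by simp
next
  case (Suc n)
  have e1: "(5/2::real) \<le> exp 1"
  proof -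
    have "(5/2::real) \<le> (1 + 1 / real (10::nat)) ^ 10" by (simp add: power_divide)
    also have "\<dots> \<le> exp 1" by (rule exp_ge_one_plus_x_over_n_power_n) auto
    finally show ?thesis .
  qed
  have "exp (real (Suc n)) = exp (real n) * exp 1" by (simp add: exp_add)
  moreover have "(real n ^ 2 + real n + 1) * (5/2) \<le> exp (real n) * exp 1"
    using Suc.IH e1 by (intro mult_mono) auto
  moreover have "real (Suc n) ^ 2 + real (Suc n) + 1 \<le> (real n ^ 2 + real n + 1) * (5/2)"
  proof -
    have n2: "2 \<le> real n" using Suc.hyps by simp
    have "2 * real n \<le> real n * real n" using n2 by (intro mult_right_mono) auto
    moreover have "real (Suc n) ^ 2 = real n * real n + 2 * real n + 1"
      by (simp add: power2_eq_square algebra_simps)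
    moreover have "real n ^ 2 = real n * real n" by (simp add: power2_eq_square)
    moreover have "real (Suc n) = real n + 1" by simp
    moreover have "((real n)^2 + real n + 1) * (5/2) = 5/2 * (real n)^2 + 5/2 * real n + 5/2"
      by (simp add: algebra_simps)
    ultimately show ?thesis using n2 by linarith
  qed
  ultimately show ?case by linarith
qed

lemma dist_one:
  assumes "x \<in> X" "B \<in> Bs"
  shows "inc_dist X Bs (Inl x) (Inr B) = 1 \<longleftrightarrow> x \<in> B"
proof
  assume "x \<in> B"
  have adj: "(inc_adj X Bs ^^ 1) (Inl x) (Inr B)"
    using assms \<open>x \<in> B\<close> by (auto simp: inc_adj_def)
  have "(LEAST n. (inc_adj X Bs ^^ n) (Inl x) (Inr B)) = 1"
  proof (rule Least_equality)
    show "(inc_adj X Bs ^^ 1) (Inl x) (Inr B)" by (rule adj)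
  next
    fix m assume "(inc_adj X Bs ^^ m) (Inl x) (Inr B)"
    then show "1 \<le> m" by (cases m) auto
  qed
  moreover have "\<exists>n. (inc_adj X Bs ^^ n) (Inl x) (Inr B)" using adj by blast
  ultimately show "inc_dist X Bs (Inl x) (Inr B) = 1"
    unfolding inc_dist_def by (auto simp: one_enat_def)
next
  assume h: "inc_dist X Bs (Inl x) (Inr B) = 1"
  then have ex: "\<exists>n. (inc_adj X Bs ^^ n) (Inl x) (Inr B)"
    unfolding inc_dist_def by (auto split: if_splits)
  then have "(LEAST n. (inc_adj X Bs ^^ n) (Inl x) (Inr B)) = 1"
    using h unfolding inc_dist_def by (auto simp: one_enat_def)
  moreover have "(inc_adj X Bs ^^ (LEAST n. (inc_adj X Bs ^^ n) (Inl x) (Inr B))) (Inl x) (Inr B)"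
    using ex by (rule LeastI_ex)
  ultimately have "(inc_adj X Bs ^^ 1) (Inl x) (Inr B)" by metis
  then have "inc_adj X Bs (Inl x) (Inr B)" by (simp only: relpowp_1)
  then show "x \<in> B" by (auto simp: inc_adj_def)
qed

lemma greedy:
  fixes X :: "'a set" and Bs :: "'a set set" and v q :: nat
  assumes fX: "finite X" and fB: "finite Bs" and cB: "card Bs = v" and vpos: "v > 0"
    and qv: "2 * q \<le> v"
    and sep: "\<forall>x\<in>X. \<forall>y\<in>X. x \<noteq> y \<longrightarrow> card {B\<in>Bs. (x\<in>B) \<noteq> (y\<in>B)} = 2 * q"
  shows "\<exists>S\<subseteq>Bs. card S \<le> t \<and>
           real (card (Ub X S)) \<le> real (card (Ub X {})) * (1 - 2 * real q / real v) ^ t"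
proof (induction t)
  case 0
  show ?case by (intro exI[of _ "{}"]) simp
next
  case (Suc t)
  define \<rho> where "\<rho> = 1 - 2 * real q / real v"
  have rho0: "0 \<le> \<rho>" using qv vpos by (simp add: \<rho>_def field_simps)
  define c where "c = real (card (Ub X {}))"
  have c0: "0 \<le> c" by (simp add: c_def)
  from Suc.IH obtain S where S: "S \<subseteq> Bs" "card S \<le> t" "real (card (Ub X S)) \<le> c * \<rho> ^ t"
    unfolding \<rho>_def c_def by blast
  define P where "P = Ub X S"
  have fP: "finite P" unfolding P_def Ub_def
    by (rule finite_subset[of _ "X \<times> X"]) (use fX in auto)
  show ?case
  proof (cases "P = {}")
    case True
    have "real (card (Ub X S)) = 0" using True unfolding P_def by simp
    also have "0 \<le> c * \<rho> ^ Suc t" using c0 rho0 by simp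
    finally have "real (card (Ub X S)) \<le> c * \<rho> ^ Suc t" .
    moreover have "card S \<le> Suc t" using S(2) by simp
    ultimately show ?thesis using S(1) unfolding \<rho>_def c_def by blast
  next
    case False
    define f where "f B = card {p\<in>P. (fst p \<in> B) \<noteq> (snd p \<in> B)}" for B
    have "(\<Sum>B\<in>Bs. f B) = (\<Sum>p\<in>P. card {B\<in>Bs. (fst p \<in> B) \<noteq> (snd p \<in> B)})"
      unfolding f_def by (rule swap_count[OF fP fB, of "\<lambda>p B. (fst p \<in> B) \<noteq> (snd p \<in> B)", symmetric])
    also have "\<dots> = (\<Sum>p\<in>P. 2 * q)"
    proof (rule sum.cong)
      fix p assume "p \<in> P"
      then have "p \<in> Ub X S" by (simp only: P_def)
      then have "fst p \<in> X" "snd p \<in> X" "fst p \<noteq> snd p" unfolding Ub_def by (simp_all add: mem_Times_iff)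
      then show "card {B\<in>Bs. (fst p \<in> B) \<noteq> (snd p \<in> B)} = 2 * q" using sep[rule_format, of "fst p" "snd p"] by simp
    qed (rule refl)
    finally have sumf: "(\<Sum>B\<in>Bs. f B) = card P * (2 * q)" by simp
    have "\<exists>B\<in>Bs. card P * (2 * q) \<le> f B * v"
    proof (rule ccontr)
      assume "\<not> ?thesis"
      then have lt: "\<forall>B\<in>Bs. f B * v < card P * (2 * q)" by auto
      have ne: "Bs \<noteq> {}" using cB vpos by auto
      have "(\<Sum>B\<in>Bs. f B * v) < (\<Sum>B\<in>Bs. card P * (2 * q))"
        by (rule sum_strict_mono[OF fB ne]) (use lt in auto)
      also have "\<dots> = v * (card P * (2 * q))" using cB by simp
      also have "(\<Sum>B\<in>Bs. f B * v) = card P * (2 * q) * v" using sumf by (metis sum_distrib_right)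
      finally show False by simp
    qed
    then obtain B where B: "B \<in> Bs" "card P * (2 * q) \<le> f B * v" by blast
    have Ueq: "Ub X (insert B S) = P - {p\<in>P. (fst p \<in> B) \<noteq> (snd p \<in> B)}"
      unfolding P_def Ub_def by auto
    have cardU: "card (Ub X (insert B S)) = card P - f B"
      unfolding Ueq f_def by (rule card_Diff_subset) (use fP in auto)
    have fle: "f B \<le> card P" unfolding f_def by (rule card_mono[OF fP]) auto
    have "real (card P) * (2 * real q) \<le> real (f B) * real v"
    proof -
      have "real (card P * (2 * q)) \<le> real (f B * v)" using B(2) by (simp only: of_nat_le_iff)
      then show ?thesis by simp
    qed
    then have "real (card P) * (2 * real q / real v) \<le> real (f B)"
      using vpos by (simp add: field_simps)
    then have "real (card (Ub X (insert B S))) \<le> real (card P) * \<rho>"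
      using cardU fle by (simp add: \<rho>_def of_nat_diff algebra_simps)
    also have "\<dots> \<le> c * \<rho> ^ t * \<rho>"
      using S(3) rho0 unfolding P_def by (rule mult_right_mono)
    finally have "real (card (Ub X (insert B S))) \<le> c * \<rho> ^ Suc t" by (simp add: mult.commute mult.left_commute)
    moreover have "card (insert B S) \<le> Suc t"
      using S(2) card_insert_if[OF finite_subset[OF S(1) fB], of B] by (simp split: if_splits)
    moreover have "insert B S \<subseteq> Bs" using S(1) B(1) by blast
    ultimately show ?thesis unfolding \<rho>_def c_def by blast
  qed
qed

theorem theorem2p5:
  fixes X :: "'a set" and Bs :: "'a set set" and v k lam :: nat
  assumes "symmetric_design X Bs v k lam"
    and "k - lam \<ge> 2"
  shows "\<exists>S \<subseteq> Bs. card S = nat \<lceil>real v * ln (real v) / real (k - lam)\<rceil> \<and>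
           (\<forall>x\<in>X. \<forall>y\<in>X. x \<noteq> y \<longrightarrow>
              (\<exists>B\<in>S. inc_dist X Bs (Inl x) (Inr B) \<noteq> inc_dist X Bs (Inl y) (Inr B)))"
proof -
  from assms(1) have fX: "finite X" and cX: "card X = v" and cB: "card Bs = v"
    and sub: "\<forall>B\<in>Bs. B \<subseteq> X \<and> card B = k"
    and pl: "\<forall>x\<in>X. \<forall>y\<in>X. x \<noteq> y \<longrightarrow> card {B \<in> Bs. x \<in> B \<and> y \<in> B} = lam"
    unfolding symmetric_design_def by auto
  define q where "q = k - lam"
  define N where "N = nat \<lceil>real v * ln (real v) / real q\<rceil>"
  have main: "\<exists>S \<subseteq> Bs. card S = N \<and> (\<forall>x\<in>X. \<forall>y\<in>X. x \<noteq> y \<longrightarrow> (\<exists>B\<in>S. (x \<in> B) \<noteq> (y \<in> B)))"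
  proof (cases "v \<le> 1")
    case True
    then have "v = 0 \<or> v = 1" by auto
    then have N0: "N = 0" unfolding N_def by auto
    have "card X \<le> Suc 0" using True cX by simp
    then have "\<forall>x\<in>X. \<forall>y\<in>X. x = y" using card_le_Suc0_iff_eq[OF fX] by blast
    then show ?thesis using N0 by (intro exI[of _ "{}"]) auto
  next
    case False
    then have v2: "v \<ge> 2" by simp
    have fB: "finite Bs" using cB v2 card.infinite by force
    have q2: "q \<ge> 2" using assms(2) q_def by simp
    have kq: "k = lam + q" using q2 q_def by simp
    have k2: "k \<ge> 2" using kq q2 by simp
    have E1: "card {B\<in>Bs. x \<in> B} * (k - 1) = (v - 1) * lam" if x: "x \<in> X" for x
    proof -
      have "(\<Sum>y\<in>X-{x}. card {B\<in>Bs. x \<in> B \<and> y \<in> B}) = (\<Sum>y\<in>X-{x}. lam)"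
        by (rule sum.cong) (auto intro: pl[rule_format, OF x])
      also have "\<dots> = (v - 1) * lam" using cX x fX by simp
      finally have a: "(\<Sum>y\<in>X-{x}. card {B\<in>Bs. x \<in> B \<and> y \<in> B}) = (v - 1) * lam" .
      have "(\<Sum>y\<in>X-{x}. card {B\<in>Bs. x \<in> B \<and> y \<in> B}) = (\<Sum>B\<in>Bs. card {y\<in>X-{x}. x \<in> B \<and> y \<in> B})"
        by (rule swap_count) (use fX fB in auto)
      also have "\<dots> = (\<Sum>B\<in>Bs. if x \<in> B then k - 1 else 0)"
      proof (rule sum.cong)
        fix B assume B: "B \<in> Bs"
        show "card {y\<in>X-{x}. x \<in> B \<and> y \<in> B} = (if x \<in> B then k - 1 else 0)"
        proof (cases "x \<in> B")
          case True
          have "{y\<in>X-{x}. x \<in> B \<and> y \<in> B} = B - {x}" using sub B True by auto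
          moreover have "finite B" using sub B fX finite_subset by blast
          ultimately show ?thesis using True sub B by simp
        qed simp
      qed simp
      also have "\<dots> = (\<Sum>B\<in>{B\<in>Bs. x \<in> B}. k - 1)" by (rule sum.inter_filter[OF fB, symmetric])
      also have "\<dots> = card {B\<in>Bs. x \<in> B} * (k - 1)" by simp
      finally show ?thesis using a by simp
    qed
    have "(\<Sum>x\<in>X. card {B\<in>Bs. x \<in> B}) = (\<Sum>B\<in>Bs. card {x\<in>X. x \<in> B})"
      by (rule swap_count[OF fX fB])
    also have "\<dots> = (\<Sum>B\<in>Bs. k)"
    proof (rule sum.cong)
      fix B assume B: "B \<in> Bs"
      then have "{x\<in>X. x \<in> B} = B" using sub by auto
      then show "card {x\<in>X. x \<in> B} = k" using sub B by simp
    qed simp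
    also have "\<dots> = v * k" using cB by simp
    finally have E2: "(\<Sum>x\<in>X. card {B\<in>Bs. x \<in> B}) = v * k" .
    have "v * (k * (k - 1)) = (\<Sum>x\<in>X. card {B\<in>Bs. x \<in> B}) * (k - 1)" using E2 by simp
    also have "\<dots> = (\<Sum>x\<in>X. card {B\<in>Bs. x \<in> B} * (k - 1))" by (rule sum_distrib_right)
    also have "\<dots> = (\<Sum>x\<in>X. (v - 1) * lam)" by (rule sum.cong) (use E1 in auto)
    also have "\<dots> = v * ((v - 1) * lam)" using cX by simp
    finally have "v * (k * (k - 1)) = v * ((v - 1) * lam)" .
    then have KK: "k * (k - 1) = (v - 1) * lam" using v2 by simp
    have rep: "card {B\<in>Bs. x \<in> B} = k" if "x \<in> X" for x
    proof -
      have "card {B\<in>Bs. x \<in> B} * (k - 1) = k * (k - 1)" using E1[OF that] KK by simp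
      then show ?thesis using k2 by simp
    qed
    have one: "card {B\<in>Bs. x \<in> B \<and> y \<notin> B} = q" if "x \<in> X" "y \<in> X" "x \<noteq> y" for x y
    proof -
      have "{B\<in>Bs. x \<in> B \<and> y \<notin> B} = {B\<in>Bs. x \<in> B} - {B\<in>Bs. x \<in> B \<and> y \<in> B}" by auto
      moreover have "card ({B\<in>Bs. x \<in> B} - {B\<in>Bs. x \<in> B \<and> y \<in> B}) = k - lam"
        using card_Diff_subset[of "{B\<in>Bs. x \<in> B \<and> y \<in> B}" "{B\<in>Bs. x \<in> B}"] fB
          rep[OF that(1)] pl[rule_format, OF that] by fastforce
      ultimately show ?thesis using q_def by simp
    qed
    have sep: "\<forall>x\<in>X. \<forall>y\<in>X. x \<noteq> y \<longrightarrow> card {B\<in>Bs. (x\<in>B) \<noteq> (y\<in>B)} = 2 * q"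
    proof (intro ballI impI)
      fix x y assume xy: "x \<in> X" "y \<in> X" "x \<noteq> y"
      have "{B\<in>Bs. (x\<in>B) \<noteq> (y\<in>B)} = {B\<in>Bs. x \<in> B \<and> y \<notin> B} \<union> {B\<in>Bs. y \<in> B \<and> x \<notin> B}" by auto
      moreover have "card ({B\<in>Bs. x \<in> B \<and> y \<notin> B} \<union> {B\<in>Bs. y \<in> B \<and> x \<notin> B}) = q + q"
        using card_Un_disjoint[of "{B\<in>Bs. x \<in> B \<and> y \<notin> B}" "{B\<in>Bs. y \<in> B \<and> x \<notin> B}"] fB
          one[OF xy] one[OF xy(2,1) xy(3)[symmetric]] by fastforce
      ultimately show "card {B\<in>Bs. (x\<in>B) \<noteq> (y\<in>B)} = 2 * q" by simp
    qed
    have qv: "2 * q \<le> v"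
    proof -
      obtain x y where xy: "x \<in> X" "y \<in> X" "x \<noteq> y"
        using v2 cX by (metis One_nat_def card_le_Suc0_iff_eq fX not_less_eq_eq numeral_2_eq_2)
      have "card {B\<in>Bs. (x\<in>B) \<noteq> (y\<in>B)} \<le> card Bs" by (rule card_mono[OF fB]) auto
      then show ?thesis using sep[rule_format, OF xy] cB by simp
    qed
    have lampos: "lam > 0"
    proof (rule ccontr)
      assume "\<not> lam > 0"
      then have "k * (k - 1) = 0" using KK by simp
      then show False using k2 by simp
    qed
    have vb: "v \<le> q * q + q + 1"
    proof -
      define l where "l = int lam"
      define Q where "Q = int q"
      define V where "V = int v"
      have eq: "(l + Q) * (l + Q - 1) = (V - 1) * l"
      proof -
        have "int (k * (k - 1)) = int ((v - 1) * lam)" using KK by simp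
        then show ?thesis using k2 v2 kq unfolding l_def Q_def V_def by (simp add: of_nat_diff)
      qed
      define b where "b = V - l - 2 * Q"
      have lb: "l * b = Q * Q - Q" using eq unfolding b_def by (simp add: algebra_simps)
      have Q2: "Q \<ge> 2" using q2 Q_def by simp
      have "2 * Q \<le> Q * Q" using Q2 by (intro mult_right_mono) auto
      then have "l * b > 0" using lb Q2 by simp
      moreover have l1: "l \<ge> 1" using lampos l_def by simp
      ultimately have b1: "b \<ge> 1" by (simp add: zero_less_mult_iff)
      have "(l - 1) * (b - 1) \<ge> 0" using l1 b1 by simp
      then have "l * b - l - b + 1 \<ge> 0" by (simp add: algebra_simps)
      then have "V \<le> Q * Q + Q + 1" using lb unfolding b_def by simp
      then have "int v \<le> int (q * q + q + 1)" unfolding V_def Q_def by simp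
      then show ?thesis by (simp only: of_nat_le_iff)
    qed
    have lnv: "ln (real v) \<le> real q"
    proof -
      have "real v \<le> real (q * q + q + 1)" using vb by (simp only: of_nat_le_iff)
      then have "real v \<le> real q ^ 2 + real q + 1" by (simp add: power2_eq_square)
      also have "\<dots> \<le> exp (real q)" by (rule exp_bound[OF q2])
      finally have "real v \<le> exp (real q)" .
      then show ?thesis using v2 ln_le_cancel_iff[of "real v" "exp (real q)"] by simp
    qed
    have ln0: "0 \<le> ln (real v)" using v2 by simp
    have qpos: "real q > 0" using q2 by simp
    have "real v * ln (real v) \<le> real v * real q" by (rule mult_left_mono) (use lnv in auto)
    then have a_le: "real v * ln (real v) / real q \<le> real v"
      using qpos by (simp add: pos_divide_le_eq mult.commute)
    have Nv: "N \<le> v" unfolding N_def using a_le by (simp add: nat_le_iff ceiling_le_iff)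
    have a0: "0 \<le> real v * ln (real v) / real q" using ln0 qpos by simp
    have Nge: "real v * ln (real v) / real q \<le> real N"
      unfolding N_def using a0 by (simp add: le_of_int_ceiling)
    obtain S where S: "S \<subseteq> Bs" "card S \<le> N"
      "real (card (Ub X S)) \<le> real (card (Ub X {})) * (1 - 2 * real q / real v) ^ N"
      using greedy[OF fX fB cB _ qv sep, of N] v2 by auto
    define \<rho> where "\<rho> = 1 - 2 * real q / real v"
    have rho0: "0 \<le> \<rho>" using qv v2 by (simp add: \<rho>_def field_simps)
    have c: "real (card (Ub X {})) \<le> real v * real v - real v"
    proof -
      have "Ub X {} = X \<times> X - (\<lambda>x. (x, x)) ` X" unfolding Ub_def by auto
      moreover have "card (X \<times> X - (\<lambda>x. (x, x)) ` X) = v * v - v"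
        by (subst card_Diff_subset) (use fX cX in \<open>auto simp: card_image inj_on_def card_cartesian_product\<close>)
      moreover have "v \<le> v * v" by simp
      ultimately show ?thesis by (simp add: of_nat_diff)
    qed
    have "\<rho> ^ N \<le> exp (- 2 * real q / real v) ^ N"
      using rho0 exp_ge_add_one_self[of "- 2 * real q / real v"] unfolding \<rho>_def
      by (intro power_mono) auto
    also have "\<dots> = exp (real N * (- 2 * real q / real v))" by (rule exp_of_nat_mult[symmetric])
    also have "\<dots> \<le> exp (- ln (real v) - ln (real v))"
    proof -
      have "real v * ln (real v) \<le> real N * real q" using Nge qpos by (simp add: field_simps)
      then have "real N * (- 2 * real q / real v) \<le> - ln (real v) - ln (real v)"
        using v2 by (simp add: field_simps)
      then show ?thesis by simp
    qed
    also have "\<dots> = 1 / (real v * real v)"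
    proof -
      have ev: "exp (ln (real v)) = real v" using v2 by simp
      have "exp (- ln (real v) - ln (real v)) = exp (- ln (real v)) * exp (- ln (real v))"
        by (metis diff_conv_add_uminus exp_add)
      also have "\<dots> = inverse (real v) * inverse (real v)" by (simp only: exp_minus ev)
      finally show ?thesis by (simp add: divide_inverse)
    qed
    finally have rN: "\<rho> ^ N \<le> 1 / (real v * real v)" .
    have c0: "0 \<le> real v * real v - real v" using v2 by (simp add: power2_eq_square)
    have "real (card (Ub X S)) \<le> (real v * real v - real v) * \<rho> ^ N"
      using S(3) c rho0 unfolding \<rho>_def[symmetric] by (meson mult_right_mono order_trans zero_le_power)
    also have "\<dots> \<le> (real v * real v - real v) * (1 / (real v * real v))"
      using rN c0 by (rule mult_left_mono)
    also have "\<dots> < 1" using v2 by (simp add: field_simps)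
    finally have "card (Ub X S) = 0" by simp
    moreover have "finite (Ub X S)" unfolding Ub_def
      by (rule finite_subset[of _ "X \<times> X"]) (use fX in auto)
    ultimately have U0: "Ub X S = {}" by simp
    obtain S' where S': "S \<subseteq> S'" "S' \<subseteq> Bs" "card S' = N"
      using exists_subset_between[OF S(2) _ S(1) fB] Nv cB by auto
    have "Ub X S' \<subseteq> Ub X S" using S'(1) unfolding Ub_def by auto
    then have U0': "Ub X S' = {}" using U0 by simp
    have res: "\<exists>B\<in>S'. (x \<in> B) \<noteq> (y \<in> B)" if "x \<in> X" "y \<in> X" "x \<noteq> y" for x y
    proof (rule ccontr)
      assume "\<not> (\<exists>B\<in>S'. (x \<in> B) \<noteq> (y \<in> B))"
      then have "(x, y) \<in> Ub X S'" using that unfolding Ub_def by auto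
      then show False using U0' by simp
    qed
    then have "\<forall>x\<in>X. \<forall>y\<in>X. x \<noteq> y \<longrightarrow> (\<exists>B\<in>S'. (x \<in> B) \<noteq> (y \<in> B))"
      by blast
    then show ?thesis using S' by blast
  qed
  then obtain S where S: "S \<subseteq> Bs" "card S = N"
    "\<forall>x\<in>X. \<forall>y\<in>X. x \<noteq> y \<longrightarrow> (\<exists>B\<in>S. (x \<in> B) \<noteq> (y \<in> B))" by blast
  have "\<forall>x\<in>X. \<forall>y\<in>X. x \<noteq> y \<longrightarrow>
              (\<exists>B\<in>S. inc_dist X Bs (Inl x) (Inr B) \<noteq> inc_dist X Bs (Inl y) (Inr B))"
  proof (intro ballI impI)
    fix x y assume xy: "x \<in> X" "y \<in> X" "x \<noteq> y"
    then obtain B where B: "B \<in> S" "(x \<in> B) \<noteq> (y \<in> B)" using S(3) by blast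
    have "B \<in> Bs" using B S(1) by auto
    then have "inc_dist X Bs (Inl x) (Inr B) \<noteq> inc_dist X Bs (Inl y) (Inr B)"
      using dist_one[OF xy(1)] dist_one[OF xy(2)] B(2) by metis
    then show "\<exists>B\<in>S. inc_dist X Bs (Inl x) (Inr B) \<noteq> inc_dist X Bs (Inl y) (Inr B)" using B(1) by blast
  qed
  then show ?thesis using S(1,2) unfolding N_def q_def by blast
qed

end
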